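(* Let $k\ge2$ be an integer and let $H_k$ be the graph with half-edges obtained from $K_{k,k}$ by deleting one vertex but keeping its $k$ incident edges as half-edges. Let $e\ne e'$ be two half-edges of $H_k$ with end vertices $x$ and $x'$ respectively. Then for every positive integer $q$, $H_k$ admits a $(q(k+1)+1,q)$-total colouring $\gamma$ such that $\gamma(e)=0$, $\gamma(e')=2$, $\gamma(x)=qk+1$ and $\gamma(x')=q+2$.
   Context: A half-edge has exactly one end vertex. For integers $p\ge q\ge1$, a $(p,q)$-total colouring of a graph (possibly with half-edges) is a map $c$ from the set of vertices, edges and half-edges to $\{0,1,\ldots,p-1\}$ such that $q\le|c(a)-c(b)|\le p-q$ whenever $a,b$ are two adjacent vertices, two edges/half-edges sharing an end vertex, or a vertex and an edge or half-edge incident with it. *)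

theory Defs
  imports Main
begin

text \<open>Elements of a graph with half-edges: vertices, edges (2-element vertex sets),
  and half-edges (abstract labels, each with exactly one end vertex).\<close>
datatype ('v, 'h) gelem = GV 'v | GE "'v set" | GH 'h

definition gelems :: "'v set \<Rightarrow> 'v set set \<Rightarrow> 'h set \<Rightarrow> ('v, 'h) gelem set" where
  "gelems V E H = GV ` V \<union> GE ` E \<union> GH ` H"

fun gends :: "('h \<Rightarrow> 'v) \<Rightarrow> ('v, 'h) gelem \<Rightarrow> 'v set" where
  "gends endv (GV v) = {}"
| "gends endv (GE e) = e"
| "gends endv (GH h) = {endv h}"

fun is_vertex :: "('v, 'h) gelem \<Rightarrow> bool" where
  "is_vertex (GV v) = True"
| "is_vertex _ = False"

definition gadj :: "'v set set \<Rightarrow> ('h \<Rightarrow> 'v) \<Rightarrow> ('v, 'h) gelem \<Rightarrow> ('v, 'h) gelem \<Rightarrow> bool" where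
  "gadj E endv a b \<longleftrightarrow> a \<noteq> b \<and>
     ((\<exists>u v. a = GV u \<and> b = GV v \<and> {u, v} \<in> E)
    \<or> (\<not> is_vertex a \<and> \<not> is_vertex b \<and> gends endv a \<inter> gends endv b \<noteq> {})
    \<or> (\<exists>v. a = GV v \<and> \<not> is_vertex b \<and> v \<in> gends endv b)
    \<or> (\<exists>v. b = GV v \<and> \<not> is_vertex a \<and> v \<in> gends endv a))"

definition pq_total_colouring ::
  "nat \<Rightarrow> nat \<Rightarrow> 'v set \<Rightarrow> 'v set set \<Rightarrow> 'h set \<Rightarrow> ('h \<Rightarrow> 'v) \<Rightarrow> (('v, 'h) gelem \<Rightarrow> nat) \<Rightarrow> bool" where
  "pq_total_colouring p q V E H endv c \<longleftrightarrow>
     (\<forall>a \<in> gelems V E H. c a < p) \<and>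
     (\<forall>a \<in> gelems V E H. \<forall>b \<in> gelems V E H. gadj E endv a b \<longrightarrow>
        int q \<le> \<bar>int (c a) - int (c b)\<bar> \<and> \<bar>int (c a) - int (c b)\<bar> \<le> int p - int q)"

text \<open>K_{k,k} has parts A 0..A(k-1) and B 0..B(k-1). H_k deletes B(k-1) and keeps its
  k incident edges {A i, B(k-1)} as half-edges; the half-edge coming from edge
  {A i, B(k-1)} is labelled i and has end vertex A i.\<close>
datatype bvert = A nat | B nat

definition Hk_V :: "nat \<Rightarrow> bvert set" where
  "Hk_V k = A ` {..<k} \<union> B ` {..<k - 1}"

definition Hk_E :: "nat \<Rightarrow> bvert set set" where
  "Hk_E k = {{A i, B j} | i j. i < k \<and> j < k - 1}"

definition Hk_H :: "nat \<Rightarrow> nat set" where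
  "Hk_H k = {..<k}"

definition Hk_end :: "nat \<Rightarrow> bvert" where
  "Hk_end i = A i"

end

theory Submission
  imports Defs
begin


definition good :: "nat \<Rightarrow> nat \<Rightarrow> nat \<Rightarrow> nat \<Rightarrow> bool" where
  "good p q x y \<longleftrightarrow> int q \<le> \<bar>int x - int y\<bar> \<and> \<bar>int x - int y\<bar> \<le> int p - int q"

lemma good_mod:
  assumes "x \<le> p" "y \<le> p" "good p q x y" "q \<ge> 1"
  shows "good p q (x mod p) (y mod p)"
proof -
  have p: "p > 0" using assms unfolding good_def by auto
  have mx: "x mod p = (if x = p then 0 else x)" using assms(1) by auto
  have my: "y mod p = (if y = p then 0 else y)" using assms(2) by auto
  show ?thesis using assms unfolding good_def mx my by (auto split: if_splits)
qed

definition okS :: "nat \<Rightarrow> nat \<Rightarrow> nat \<Rightarrow> nat \<Rightarrow> nat \<Rightarrow> bool" where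
  "okS k S1 d1 S2 d2 \<longleftrightarrow> S1 \<le> k \<and> S2 \<le> k \<and> d1 \<le> 2 \<and> d2 \<le> 2 \<and>
    ((S1 < S2 \<and> (S2 = S1 + 1 \<longrightarrow> d1 \<le> d2) \<and> d1 \<le> d2 + 1 \<and> (S2 = S1 + k \<longrightarrow> d2 \<le> d1 + 1))
   \<or> (S2 < S1 \<and> (S1 = S2 + 1 \<longrightarrow> d2 \<le> d1) \<and> d2 \<le> d1 + 1 \<and> (S1 = S2 + k \<longrightarrow> d1 \<le> d2 + 1)))"

lemma okS_good_aux:
  fixes S1 S2 d1 d2 :: nat
  assumes q: "q \<ge> 1" and "S1 < S2" "S2 \<le> k" "d1 \<le> 2" "d2 \<le> 2"
    "S2 = S1 + 1 \<longrightarrow> d1 \<le> d2" "d1 \<le> d2 + 1" "S2 = S1 + k \<longrightarrow> d2 \<le> d1 + 1"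
  shows "good (q*(k+1)+1) q (S1*q+d1) (S2*q+d2)"
proof -
  define D where "D = S2 - S1"
  have S2: "S2 = S1 + D" "D \<ge> 1" "D \<le> k" using assms unfolding D_def by auto
  have diff: "int (S1*q+d1) - int (S2*q+d2) = - (int D * int q + int d2 - int d1)"
    using S2 by (simp add: algebra_simps)
  have lo: "int q \<le> int D * int q + int d2 - int d1"
  proof (cases "D = 1")
    case True then show ?thesis using assms S2 by auto
  next
    case False
    then have "int D * int q \<ge> 2 * int q" using S2 by (intro mult_right_mono) auto
    then show ?thesis using assms by linarith
  qed
  have hi: "int D * int q + int d2 - int d1 \<le> int (q*(k+1)+1) - int q"
  proof (cases "D = k")
    case True then show ?thesis using assms S2 by (auto simp: algebra_simps)
  next
    case False
    then have "int D * int q \<le> (int k - 1) * int q" using S2 by (intro mult_right_mono) auto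
    then show ?thesis using assms by (simp add: algebra_simps)
  qed
  show ?thesis unfolding good_def diff using lo hi by auto
qed

lemma good_sym: "good p q x y \<Longrightarrow> good p q y x"
  unfolding good_def by auto

lemma okS_good:
  assumes "q \<ge> 1" "okS k S1 d1 S2 d2"
  shows "good (q*(k+1)+1) q (S1*q+d1) (S2*q+d2)"
  using assms unfolding okS_def
  by (metis okS_good_aux good_sym)

lemma val_le:
  assumes "q \<ge> 1" "S \<le> k" "d \<le> (2::nat)"
  shows "S*q+d \<le> q*(k+1)+1"
proof -
  have "S*q \<le> k*q" using assms by (intro mult_right_mono) auto
  moreover have "q*(k+1)+1 = k*q + q + 1" by (simp add: algebra_simps)
  ultimately show ?thesis using assms by linarith
qed



definition sE :: "nat \<Rightarrow> nat \<Rightarrow> nat \<Rightarrow> nat" where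
  "sE k r j = (r + j) mod k + 1"
definition dE :: "nat \<Rightarrow> nat \<Rightarrow> nat \<Rightarrow> nat" where
  "dE k r j = (if sE k r j \<le> j + 1 then 1 else 2)"
definition sA :: "nat \<Rightarrow> nat \<Rightarrow> nat" where "sA k r = (if r = 0 then k else r)"
definition dA :: "nat \<Rightarrow> nat" where "dA r = (if r = 1 then 2 else 1)"
definition dH :: "nat \<Rightarrow> nat" where "dH r = (if r = 0 then 0 else if r = 1 then 2 else 1)"

lemma modk: fixes r j k :: nat assumes "r < k" "j < k" shows "(r + j) mod k = (if r + j < k then r + j else r + j - k)"
proof (cases "r + j < k")
  case True then show ?thesis by simp
next
  case False
  then have e: "r + j = (r + j - k) + k" by simp
  have "(r + j) mod k = (r + j - k) mod k" by (subst e) (simp only: mod_add_self2)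
  also have "\<dots> = r + j - k" using False assms by simp
  finally show ?thesis using False by simp
qed

lemma sE_eq: "r < k \<Longrightarrow> j < k \<Longrightarrow> sE k r j = (if r + j < k then r + j + 1 else r + j + 1 - k)"
  unfolding sE_def using modk[of r k j] by (simp split: if_splits)

lemma L1: "k \<ge> 2 \<Longrightarrow> r < k \<Longrightarrow> okS k (sA k r) (dA r) 0 1"
  unfolding okS_def sA_def dA_def by auto
lemma L2: "k \<ge> 2 \<Longrightarrow> r < k \<Longrightarrow> okS k (sA k r) (dA r) 0 (dH r)"
  unfolding okS_def sA_def dA_def dH_def by auto
lemma L3: "k \<ge> 2 \<Longrightarrow> r < k \<Longrightarrow> j < k - 1 \<Longrightarrow> okS k (sA k r) (dA r) (sE k r j) (dE k r j)"
  unfolding okS_def sA_def dA_def dE_def by (auto simp: sE_eq)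
lemma L4: "k \<ge> 2 \<Longrightarrow> r < k \<Longrightarrow> j < k - 1 \<Longrightarrow> okS k 0 1 (sE k r j) (dE k r j)"
  unfolding okS_def dE_def by (auto simp: sE_eq)
lemma L5: "k \<ge> 2 \<Longrightarrow> r < k \<Longrightarrow> j < k - 1 \<Longrightarrow> okS k 0 (dH r) (sE k r j) (dE k r j)"
  unfolding okS_def dH_def dE_def by (auto simp: sE_eq)
lemma L6: "k \<ge> 2 \<Longrightarrow> r < k \<Longrightarrow> j < k - 1 \<Longrightarrow> j' < k - 1 \<Longrightarrow> j \<noteq> j' \<Longrightarrow>
   okS k (sE k r j) (dE k r j) (sE k r j') (dE k r j')"
  unfolding okS_def dE_def by (auto simp: sE_eq)
lemma L7: "k \<ge> 2 \<Longrightarrow> r < k \<Longrightarrow> r' < k \<Longrightarrow> j < k - 1 \<Longrightarrow> r \<noteq> r' \<Longrightarrow>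
   okS k (sE k r j) (dE k r j) (sE k r' j) (dE k r' j)"
  unfolding okS_def dE_def by (auto simp: sE_eq)



definition sw :: "nat \<Rightarrow> nat \<Rightarrow> nat \<Rightarrow> nat" where
  "sw a b x = (if x = a then b else if x = b then a else x)"

lemma sw_inv: "sw a b (sw a b x) = x" unfolding sw_def by auto
lemma sw_inj: "sw a b x = sw a b y \<Longrightarrow> x = y" by (metis sw_inv)
lemma sw_lt: "a < k \<Longrightarrow> b < k \<Longrightarrow> x < k \<Longrightarrow> sw a b x < k" unfolding sw_def by auto

definition prm :: "nat \<Rightarrow> nat \<Rightarrow> nat \<Rightarrow> nat" where
  "prm e e' i = sw (sw e 0 e') 1 (sw e 0 i)"

lemma prm_e: "e \<noteq> e' \<Longrightarrow> prm e e' e = 0"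
  unfolding prm_def sw_def by auto
lemma prm_e': "e \<noteq> e' \<Longrightarrow> prm e e' e' = 1"
  unfolding prm_def sw_def by auto
lemma prm_lt: "e < k \<Longrightarrow> e' < k \<Longrightarrow> 2 \<le> k \<Longrightarrow> i < k \<Longrightarrow> prm e e' i < k"
  unfolding prm_def by (intro sw_lt) (auto intro: sw_lt)
lemma prm_inj: "prm e e' i = prm e e' i' \<Longrightarrow> i = i'"
  unfolding prm_def by (metis sw_inj)

definition SD :: "nat \<Rightarrow> (nat \<Rightarrow> nat) \<Rightarrow> (bvert, nat) gelem \<Rightarrow> nat \<times> nat" where
  "SD k \<pi> x = (case x of
      GV (A i) \<Rightarrow> (sA k (\<pi> i), dA (\<pi> i))
    | GV (B j) \<Rightarrow> (0, 1)
    | GH i \<Rightarrow> (0, dH (\<pi> i))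
    | GE E \<Rightarrow> (sE k (\<pi> (THE i. A i \<in> E)) (THE j. B j \<in> E), dE k (\<pi> (THE i. A i \<in> E)) (THE j. B j \<in> E)))"

lemma theA[simp]: "(THE x. A x \<in> {A i, B j}) = i" by (rule the_equality) auto
lemma theB[simp]: "(THE x. B x \<in> {A i, B j}) = j" by (rule the_equality) auto

lemma SD_simps[simp]:
  "SD k \<pi> (GV (A i)) = (sA k (\<pi> i), dA (\<pi> i))"
  "SD k \<pi> (GV (B j)) = (0, 1)"
  "SD k \<pi> (GH i) = (0, dH (\<pi> i))"
  "SD k \<pi> (GE {A i, B j}) = (sE k (\<pi> i) j, dE k (\<pi> i) j)"
  unfolding SD_def by auto

definition okP :: "nat \<Rightarrow> nat \<times> nat \<Rightarrow> nat \<times> nat \<Rightarrow> bool" where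
  "okP k x y = okS k (fst x) (snd x) (fst y) (snd y)"

lemma okP_sym: "okP k x y \<Longrightarrow> okP k y x" unfolding okP_def okS_def by auto

lemma elem_cases:
  assumes "x \<in> gelems (Hk_V k) (Hk_E k) (Hk_H k)"
  obtains (VA) i where "i < k" "x = GV (A i)"
   | (VB) j where "j < k - 1" "x = GV (B j)"
   | (H) i where "i < k" "x = GH i"
   | (E) i j where "i < k" "j < k - 1" "x = GE {A i, B j}"
  using assms unfolding gelems_def Hk_V_def Hk_E_def Hk_H_def by auto

lemma E_iff: "{A i, B j} \<in> Hk_E k \<longleftrightarrow> i < k \<and> j < k - 1"
  unfolding Hk_E_def by (auto simp: doubleton_eq_iff)
lemma notAA: "{A i, A i'} \<notin> Hk_E k" unfolding Hk_E_def by (auto simp: doubleton_eq_iff)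
lemma notBB: "{B i, B i'} \<notin> Hk_E k" unfolding Hk_E_def by (auto simp: doubleton_eq_iff)
lemma BA: "{B j, A i} = {A i, B j}" by auto

lemma adj_ok:
  assumes k: "k \<ge> 2" and \<pi>: "\<And>i. i < k \<Longrightarrow> \<pi> i < k" "\<And>i i'. \<pi> i = \<pi> i' \<Longrightarrow> i = i'"
    and a: "a \<in> gelems (Hk_V k) (Hk_E k) (Hk_H k)" and b: "b \<in> gelems (Hk_V k) (Hk_E k) (Hk_H k)"
    and adj: "gadj (Hk_E k) Hk_end a b"
  shows "okP k (SD k \<pi> a) (SD k \<pi> b)"
  using a
proof (cases rule: elem_cases)
  case (VA i)
  have ri: "\<pi> i < k" using \<pi>(1) VA by blast
  show ?thesis using b
  proof (cases rule: elem_cases)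
    case (VA i') then have ri': "\<pi> i' < k" using \<pi>(1) by blast
    show ?thesis using VA adj \<open>a = _\<close> notAA by (auto simp: gadj_def)
  next
    case (VB j) then show ?thesis using VA L1[OF k ri] by (simp add: okP_def)
  next
    case (H i') then show ?thesis using VA adj L2[OF k ri]
      by (auto simp: okP_def gadj_def Hk_end_def)
  next
    case (E i' j) then show ?thesis using VA adj L3[OF k ri E(2)]
      by (auto simp: okP_def gadj_def)
  qed
next
  case (VB j)
  show ?thesis using b
  proof (cases rule: elem_cases)
    case (VA i) then have ri: "\<pi> i < k" using \<pi>(1) by blast
    show ?thesis using VA VB L1[OF k ri] okP_sym by (simp add: okP_def okS_def)
  next
    case (VB j') then show ?thesis using adj \<open>a = _\<close> notBB by (auto simp: gadj_def)
  next
    case (H i') then show ?thesis using VB adj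
      by (auto simp: okP_def gadj_def Hk_end_def)
  next
    case (E i' j') then have ri': "\<pi> i' < k" using \<pi>(1) by blast
    show ?thesis using E VB adj L4[OF k ri' E(2)]
      by (auto simp: okP_def gadj_def)
  qed
next
  case (H i)
  have ri: "\<pi> i < k" using \<pi>(1) H by blast
  show ?thesis using b
  proof (cases rule: elem_cases)
    case (VA i') then have ri': "\<pi> i' < k" using \<pi>(1) by blast
    show ?thesis using VA H adj L2[OF k ri'] okP_sym
      by (auto simp: okP_def gadj_def Hk_end_def)
  next
    case (VB j') then show ?thesis using H adj by (auto simp: okP_def gadj_def Hk_end_def)
  next
    case (H i') then show ?thesis using \<open>a = _\<close> adj by (auto simp: okP_def gadj_def Hk_end_def)
  next
    case (E i' j') then have ri': "\<pi> i' < k" using \<pi>(1) by blast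
    show ?thesis using E H adj L5[OF k ri' E(2)]
      by (auto simp: okP_def gadj_def Hk_end_def)
  qed
next
  case (E i j)
  have ri: "\<pi> i < k" using \<pi>(1) E by blast
  note Eo = E
  show ?thesis using b
  proof (cases rule: elem_cases)
    case (VA i') then have ri': "\<pi> i' < k" using \<pi>(1) by blast
    show ?thesis using VA E adj L3[OF k ri' E(2)] okP_sym
      by (auto simp: okP_def gadj_def)
  next
    case (VB j') then show ?thesis using E adj L4[OF k ri E(2)] okP_sym
      by (auto simp: okP_def gadj_def)
  next
    case (H i') then show ?thesis using E adj L5[OF k ri E(2)] okP_sym
      by (auto simp: okP_def gadj_def Hk_end_def)
  next
    case (E i' j')
    have ri': "\<pi> i' < k" using \<pi>(1) E by blast
    have "i = i' \<and> j \<noteq> j' \<or> j = j' \<and> i \<noteq> i'"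
      using Eo E adj by (auto simp: gadj_def doubleton_eq_iff)
    then show ?thesis
    proof
      assume h: "i = i' \<and> j \<noteq> j'"
      show ?thesis using L6[OF k ri Eo(2) E(2)] h Eo E by (simp add: okP_def)
    next
      assume h: "j = j' \<and> i \<noteq> i'"
      then have "\<pi> i \<noteq> \<pi> i'" using \<pi>(2) by blast
      then show ?thesis using L7[OF k ri ri' Eo(2)] h Eo E by (simp add: okP_def)
    qed
  qed
qed



theorem lemma7:
  fixes k q :: nat and e e' :: nat
  assumes "k \<ge> 2" and "q \<ge> 1"
    and "e \<in> Hk_H k" and "e' \<in> Hk_H k" and "e \<noteq> e'"
  shows "\<exists>\<gamma>. pq_total_colouring (q * (k + 1) + 1) q (Hk_V k) (Hk_E k) (Hk_H k) Hk_end \<gamma>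
           \<and> \<gamma> (GH e) = 0 \<and> \<gamma> (GH e') = 2
           \<and> \<gamma> (GV (Hk_end e)) = q * k + 1 \<and> \<gamma> (GV (Hk_end e')) = q + 2"
proof -
  define p where "p = q * (k + 1) + 1"
  define \<pi> where "\<pi> = prm e e'"
  define raw where "raw x = fst (SD k \<pi> x) * q + snd (SD k \<pi> x)" for x
  define \<gamma> where "\<gamma> x = raw x mod p" for x
  have ek: "e < k" "e' < k" using assms(3,4) unfolding Hk_H_def by auto
  have \<pi>1: "\<And>i. i < k \<Longrightarrow> \<pi> i < k" unfolding \<pi>_def using prm_lt ek assms(1) by blast
  have \<pi>2: "\<And>i i'. \<pi> i = \<pi> i' \<Longrightarrow> i = i'" unfolding \<pi>_def using prm_inj by blast
  have p0: "p > 0" unfolding p_def by simp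
  have col: "pq_total_colouring p q (Hk_V k) (Hk_E k) (Hk_H k) Hk_end \<gamma>"
    unfolding pq_total_colouring_def
  proof (intro conjI ballI impI)
    fix a assume "a \<in> gelems (Hk_V k) (Hk_E k) (Hk_H k)"
    show "\<gamma> a < p" unfolding \<gamma>_def using p0 by simp
  next
    fix a b assume a: "a \<in> gelems (Hk_V k) (Hk_E k) (Hk_H k)" and b: "b \<in> gelems (Hk_V k) (Hk_E k) (Hk_H k)"
      and adj: "gadj (Hk_E k) Hk_end a b"
    have ok: "okS k (fst (SD k \<pi> a)) (snd (SD k \<pi> a)) (fst (SD k \<pi> b)) (snd (SD k \<pi> b))"
      using adj_ok[OF assms(1) \<pi>1 \<pi>2 a b adj] unfolding okP_def .
    have g: "good p q (raw a) (raw b)" unfolding raw_def p_def using okS_good[OF assms(2) ok] .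
    have la: "raw a \<le> p" unfolding raw_def p_def using ok val_le[OF assms(2)] unfolding okS_def by blast
    have lb: "raw b \<le> p" unfolding raw_def p_def using ok val_le[OF assms(2)] unfolding okS_def by blast
    have "good p q (\<gamma> a) (\<gamma> b)" unfolding \<gamma>_def using good_mod[OF la lb g assms(2)] .
    then show "int q \<le> \<bar>int (\<gamma> a) - int (\<gamma> b)\<bar>" "\<bar>int (\<gamma> a) - int (\<gamma> b)\<bar> \<le> int p - int q"
      unfolding good_def by auto
  qed
  have pe: "\<pi> e = 0" "\<pi> e' = 1" unfolding \<pi>_def using prm_e prm_e' assms(5) by auto
  have "q * 3 \<le> q * (k + 1)" using assms(1) by (intro mult_left_mono) auto
  then have p2: "q + 2 < p" unfolding p_def using assms(2) by linarith
  have r1: "raw (GH e) = 0" unfolding raw_def using pe by (simp add: dH_def)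
  have r2: "raw (GH e') = 2" unfolding raw_def using pe by (simp add: dH_def)
  have r3: "raw (GV (Hk_end e)) = q * k + 1" unfolding raw_def Hk_end_def using pe
    by (simp add: sA_def dA_def mult.commute)
  have r4: "raw (GV (Hk_end e')) = q + 2" unfolding raw_def Hk_end_def using pe
    by (simp add: sA_def dA_def)
  have v1: "\<gamma> (GH e) = 0" unfolding \<gamma>_def r1 by simp
  have v2: "\<gamma> (GH e') = 2" unfolding \<gamma>_def r2 using p2 by simp
  have v3: "\<gamma> (GV (Hk_end e)) = q * k + 1" unfolding \<gamma>_def r3 p_def using assms(2) by simp
  have v4: "\<gamma> (GV (Hk_end e')) = q + 2" unfolding \<gamma>_def r4 using p2 by simp
  show ?thesis using col v1 v2 v3 v4 unfolding p_def by blast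
qed

end
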